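(* Consider a sequence of problems indexed by $n$, with $p=p_n$ and a distribution of $(X,Y)$ that may depend on $n$. For each $n$, let $(X_1,Y_1),\dots,(X_n,Y_n)$ be i.i.d. copies of $(X,Y)$ with $X\in\mathbb{R}^p$, $Y\in\mathbb{R}$, $E(Y^2)<\infty$, $E(\|X\|^2)<\infty$, $E(X)=0$ and $\mathrm{Var}(X)=\mathbf{I}$. Let $\beta=E(XY)$, $\tau^2=\|\beta\|^2$, $W_i=X_iY_i$, $W=XY$, $\mathbf{A}=E(WW^T)$ and $\hat\tau^2=\binom{n}{2}^{-1}\sum_{i_1<i_2}W_{i_1}^TW_{i_2}$. Assume that $\|\mathbf{A}\|_F^2/n^2\to 0$ as $n\to\infty$ and that $\tau^2$ is bounded. Then $\hat\tau^2-\tau^2\to 0$ in probability.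
   Context: $\|\cdot\|_F$ is the Frobenius norm. $\beta$ is the slope of the best linear predictor of $Y$ given $X$; no linearity of $E(Y\mid X)$ is assumed. *)

theory Defs
  imports "HOL-Probability.Probability"
begin

text \<open>A vector in R^p is represented as a function nat => real whose values
  at indices j >= p are undefined (the carrier of PiM {..<p}). An observation
  (X,Y) lives in R^p x R.\<close>
definition obs_space :: "nat \<Rightarrow> ((nat \<Rightarrow> real) \<times> real) measure" where
  "obs_space p = (PiM {..<p} (\<lambda>_. borel)) \<Otimes>\<^sub>M borel"

definition beta_vec :: "'a measure \<Rightarrow> ('a \<Rightarrow> (nat \<Rightarrow> real) \<times> real) \<Rightarrow> nat \<Rightarrow> real" where
  "beta_vec M V j = (\<integral>\<omega>. fst (V \<omega>) j * snd (V \<omega>) \<partial>M)"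

definition tau2 :: "'a measure \<Rightarrow> nat \<Rightarrow> ('a \<Rightarrow> (nat \<Rightarrow> real) \<times> real) \<Rightarrow> real" where
  "tau2 M p V = (\<Sum>j<p. (beta_vec M V j)\<^sup>2)"

definition A_mat :: "'a measure \<Rightarrow> ('a \<Rightarrow> (nat \<Rightarrow> real) \<times> real) \<Rightarrow> nat \<Rightarrow> nat \<Rightarrow> real" where
  "A_mat M V j k = (\<integral>\<omega>. (fst (V \<omega>) j * snd (V \<omega>)) * (fst (V \<omega>) k * snd (V \<omega>)) \<partial>M)"

definition A_frob2 :: "'a measure \<Rightarrow> nat \<Rightarrow> ('a \<Rightarrow> (nat \<Rightarrow> real) \<times> real) \<Rightarrow> real" where
  "A_frob2 M p V = (\<Sum>j<p. \<Sum>k<p. (A_mat M V j k)\<^sup>2)"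

definition tau2_hat :: "nat \<Rightarrow> nat \<Rightarrow> (nat \<Rightarrow> 'a \<Rightarrow> (nat \<Rightarrow> real) \<times> real) \<Rightarrow> 'a \<Rightarrow> real" where
  "tau2_hat n p D \<omega> = inverse (real (n choose 2)) *
     (\<Sum>i2<n. \<Sum>i1<i2. \<Sum>j<p.
        (fst (D i1 \<omega>) j * snd (D i1 \<omega>)) * (fst (D i2 \<omega>) j * snd (D i2 \<omega>)))"

end

theory Submission
  imports Defs "HOL-Real_Asymp.Real_Asymp"
begin

lemma meas_fst_j[measurable]: "(\<lambda>x. fst x j) \<in> borel_measurable (obs_space p)"
proof (cases "j < p")
  case True
  then show ?thesis unfolding obs_space_def apply measurable using True by simp
next
  case False
  have "(\<lambda>x. undefined) \<in> borel_measurable (obs_space p)" by simp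
  moreover have "\<And>x. x \<in> space (obs_space p) \<Longrightarrow> undefined = fst x j"
    using False by (auto simp: obs_space_def space_pair_measure space_PiM PiE_def extensional_def)
  ultimately show ?thesis by (rule measurable_cong[THEN iffD1, rotated])
qed

lemma meas_snd[measurable]: "(\<lambda>x. snd x) \<in> borel_measurable (obs_space p)"
  unfolding obs_space_def by measurable

lemma absprod: "\<bar>(a::real) * b\<bar> \<le> a\<^sup>2 + b\<^sup>2"
proof -
  have "0 \<le> (\<bar>a\<bar> - \<bar>b\<bar>)\<^sup>2" by simp
  hence "2 * (\<bar>a\<bar> * \<bar>b\<bar>) \<le> \<bar>a\<bar>\<^sup>2 + \<bar>b\<bar>\<^sup>2" by (simp add: power2_eq_square algebra_simps)
  moreover have "0 \<le> \<bar>a\<bar> * \<bar>b\<bar>" by simp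
  ultimately show ?thesis unfolding abs_mult power2_abs by linarith
qed

lemma L2_mult:
  fixes f g :: "'a \<Rightarrow> real"
  assumes "integrable M (\<lambda>x. (f x)\<^sup>2)" "integrable M (\<lambda>x. (g x)\<^sup>2)"
    "f \<in> borel_measurable M" "g \<in> borel_measurable M"
  shows "integrable M (\<lambda>x. f x * g x)"
proof (rule Bochner_Integration.integrable_bound[where f="\<lambda>x. (f x)\<^sup>2 + (g x)\<^sup>2"])
  show "integrable M (\<lambda>x. (f x)\<^sup>2 + (g x)\<^sup>2)" using assms by auto
  show "(\<lambda>x. f x * g x) \<in> borel_measurable M" using assms by measurable
  show "AE x in M. norm (f x * g x) \<le> norm ((f x)\<^sup>2 + (g x)\<^sup>2)"
  proof
    fix x
    have "\<bar>f x * g x\<bar> \<le> (f x)\<^sup>2 + (g x)\<^sup>2" by (rule absprod)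
    then show "norm (f x * g x) \<le> norm ((f x)\<^sup>2 + (g x)\<^sup>2)" by simp
  qed
qed

lemma (in prob_space) L2_L1:
  fixes f :: "'a \<Rightarrow> real"
  assumes "integrable M (\<lambda>x. (f x)\<^sup>2)" "f \<in> borel_measurable M"
  shows "integrable M f"
  using L2_mult[OF assms(1) _ assms(2), of "\<lambda>_. 1"] by simp


definition wv :: "nat \<Rightarrow> (nat \<Rightarrow> real) \<times> real \<Rightarrow> real" where
  "wv j x = fst x j * snd x"

lemma wv_meas[measurable]: "wv j \<in> borel_measurable (obs_space p)"
  unfolding wv_def by measurable

locale tsetup = prob_space M for M :: "'a measure" +
  fixes p :: nat and n :: nat and V :: "'a \<Rightarrow> (nat \<Rightarrow> real) \<times> real"
    and D :: "nat \<Rightarrow> 'a \<Rightarrow> (nat \<Rightarrow> real) \<times> real"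
  assumes V_meas[measurable]: "V \<in> measurable M (obs_space p)"
    and D_meas: "\<And>i. i < n \<Longrightarrow> D i \<in> measurable M (obs_space p)"
    and D_indep: "indep_vars (\<lambda>_. obs_space p) D {..<n}"
    and D_ident: "\<And>i. i < n \<Longrightarrow>
        distr M (obs_space p) (D i) = distr M (obs_space p) V"
    and A_fin: "\<And>j k. j < p \<Longrightarrow> k < p \<Longrightarrow>
        integrable M (\<lambda>\<omega>. (fst (V \<omega>) j * snd (V \<omega>)) * (fst (V \<omega>) k * snd (V \<omega>)))"
begin

abbreviation "bt j \<equiv> beta_vec M V j"

definition dv :: "nat \<Rightarrow> (nat \<Rightarrow> real) \<times> real \<Rightarrow> real" where
  "dv j x = wv j x - bt j"

lemma dv_meas[measurable]: "dv j \<in> borel_measurable (obs_space p)"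
  unfolding dv_def by measurable

lemma transfer_int:
  fixes f :: "(nat \<Rightarrow> real) \<times> real \<Rightarrow> real"
  assumes "i < n" "f \<in> borel_measurable (obs_space p)"
  shows "integrable M (\<lambda>\<omega>. f (D i \<omega>)) \<longleftrightarrow> integrable M (\<lambda>\<omega>. f (V \<omega>))"
  using integrable_distr_eq[OF D_meas[OF assms(1)] assms(2)]
    integrable_distr_eq[OF V_meas assms(2)] D_ident[OF assms(1)] by simp

lemma transfer_eq:
  fixes f :: "(nat \<Rightarrow> real) \<times> real \<Rightarrow> real"
  assumes "i < n" "f \<in> borel_measurable (obs_space p)"
  shows "(\<integral>\<omega>. f (D i \<omega>) \<partial>M) = (\<integral>\<omega>. f (V \<omega>) \<partial>M)"
  using integral_distr[OF D_meas[OF assms(1)] assms(2)]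
    integral_distr[OF V_meas assms(2)] D_ident[OF assms(1)] by simp

lemma core:
  fixes F :: "nat \<Rightarrow> (nat \<Rightarrow> real) \<times> real \<Rightarrow> real"
  assumes K: "K \<subseteq> {..<n}" and Fm: "\<And>i. i \<in> K \<Longrightarrow> F i \<in> borel_measurable (obs_space p)"
    and Fi: "\<And>i. i \<in> K \<Longrightarrow> integrable M (\<lambda>\<omega>. F i (V \<omega>))"
  shows "integrable M (\<lambda>\<omega>. \<Prod>i\<in>K. F i (D i \<omega>))"
    and "(\<integral>\<omega>. (\<Prod>i\<in>K. F i (D i \<omega>)) \<partial>M) = (\<Prod>i\<in>K. \<integral>\<omega>. F i (V \<omega>) \<partial>M)"
proof -
  have fin: "finite K" using K finite_subset by blast
  have ind: "indep_vars (\<lambda>_. borel) (\<lambda>i \<omega>. F i (D i \<omega>)) K"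
    by (rule indep_vars_compose2[OF indep_vars_subset[OF D_indep K]]) (use Fm in auto)
  have int: "\<And>i. i \<in> K \<Longrightarrow> integrable M (\<lambda>\<omega>. F i (D i \<omega>))"
    using transfer_int Fi Fm K by blast
  show "integrable M (\<lambda>\<omega>. \<Prod>i\<in>K. F i (D i \<omega>))"
    using indep_vars_integrable[OF fin ind int] by simp
  have "(\<integral>\<omega>. (\<Prod>i\<in>K. F i (D i \<omega>)) \<partial>M) = (\<Prod>i\<in>K. \<integral>\<omega>. F i (D i \<omega>) \<partial>M)"
    using indep_vars_lebesgue_integral[OF fin ind int] by simp
  also have "\<dots> = (\<Prod>i\<in>K. \<integral>\<omega>. F i (V \<omega>) \<partial>M)"
    by (rule prod.cong) (use transfer_eq Fm K in auto)
  finally show "(\<integral>\<omega>. (\<Prod>i\<in>K. F i (D i \<omega>)) \<partial>M) = (\<Prod>i\<in>K. \<integral>\<omega>. F i (V \<omega>) \<partial>M)" .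
qed

lemma wsq: "j < p \<Longrightarrow> integrable M (\<lambda>\<omega>. (wv j (V \<omega>))\<^sup>2)"
  using A_fin[of j j] by (simp add: wv_def power2_eq_square)

lemma wint: "j < p \<Longrightarrow> integrable M (\<lambda>\<omega>. wv j (V \<omega>))"
  by (rule L2_L1[OF wsq]) auto

lemma ww_int: "j < p \<Longrightarrow> k < p \<Longrightarrow> integrable M (\<lambda>\<omega>. wv j (V \<omega>) * wv k (V \<omega>))"
  using A_fin[of j k] by (simp add: wv_def)

lemma dsq: "j < p \<Longrightarrow> integrable M (\<lambda>\<omega>. (dv j (V \<omega>))\<^sup>2)"
proof -
  assume j: "j < p"
  have "(\<lambda>\<omega>. (dv j (V \<omega>))\<^sup>2) = (\<lambda>\<omega>. (wv j (V \<omega>))\<^sup>2 - 2 * bt j * wv j (V \<omega>) + (bt j)\<^sup>2)"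
    by (simp add: dv_def power2_diff algebra_simps)
  then show ?thesis using wsq[OF j] wint[OF j] by simp
qed

lemma dint: "j < p \<Longrightarrow> integrable M (\<lambda>\<omega>. dv j (V \<omega>))"
  by (rule L2_L1[OF dsq]) auto

lemma dmean: "j < p \<Longrightarrow> (\<integral>\<omega>. dv j (V \<omega>) \<partial>M) = 0"
  using wint[of j] by (simp add: dv_def beta_vec_def wv_def prob_space)

lemma dd_int: "j < p \<Longrightarrow> k < p \<Longrightarrow> integrable M (\<lambda>\<omega>. dv j (V \<omega>) * dv k (V \<omega>))"
  by (rule L2_mult[OF dsq dsq]) auto

lemma dd_eq: "j < p \<Longrightarrow> k < p \<Longrightarrow> (\<integral>\<omega>. dv j (V \<omega>) * dv k (V \<omega>) \<partial>M)
   = A_mat M V j k - bt j * bt k"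
proof -
  assume j: "j < p" and k: "k < p"
  have "(\<lambda>\<omega>. dv j (V \<omega>) * dv k (V \<omega>)) = (\<lambda>\<omega>. wv j (V \<omega>) * wv k (V \<omega>)
     - bt k * wv j (V \<omega>) - bt j * wv k (V \<omega>) + bt j * bt k)"
    by (simp add: dv_def algebra_simps)
  then show ?thesis using ww_int[OF j k] wint[OF j] wint[OF k]
    by (simp add: A_mat_def wv_def beta_vec_def prob_space)
qed


definition lv :: "(nat \<Rightarrow> real) \<times> real \<Rightarrow> real" where
  "lv x = (\<Sum>j<p. bt j * dv j x)"

lemma lv_meas[measurable]: "lv \<in> borel_measurable (obs_space p)"
  unfolding lv_def by measurable

lemma lv_int: "integrable M (\<lambda>\<omega>. lv (V \<omega>))"
  unfolding lv_def using dint by auto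

lemma lv_mean: "(\<integral>\<omega>. lv (V \<omega>) \<partial>M) = 0"
  unfolding lv_def using dint dmean by (simp add: integral_sum)

lemma lv_sq_int: "integrable M (\<lambda>\<omega>. (lv (V \<omega>))\<^sup>2)"
proof -
  have "(\<lambda>\<omega>. (lv (V \<omega>))\<^sup>2) = (\<lambda>\<omega>. \<Sum>j<p. \<Sum>k<p. bt j * bt k * (dv j (V \<omega>) * dv k (V \<omega>)))"
    unfolding lv_def power2_eq_square sum_product by (simp add: algebra_simps)
  then show ?thesis using dd_int by (auto intro!: Bochner_Integration.integrable_sum integrable_mult_right)
qed

lemma pairL:
  assumes a: "a < n" and c: "c < n"
  shows "integrable M (\<lambda>\<omega>. lv (D a \<omega>) * lv (D c \<omega>))"
    and "(\<integral>\<omega>. lv (D a \<omega>) * lv (D c \<omega>) \<partial>M) = (if a = c then (\<integral>\<omega>. (lv (V \<omega>))\<^sup>2 \<partial>M) else 0)"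
proof -
  have "integrable M (\<lambda>\<omega>. lv (D a \<omega>) * lv (D c \<omega>)) \<and>
    (\<integral>\<omega>. lv (D a \<omega>) * lv (D c \<omega>) \<partial>M) = (if a = c then (\<integral>\<omega>. (lv (V \<omega>))\<^sup>2 \<partial>M) else 0)"
  proof (cases "a = c")
    case True
    have m: "(\<lambda>x. (lv x)\<^sup>2) \<in> borel_measurable (obs_space p)" by measurable
    show ?thesis using True transfer_int[OF a m] transfer_eq[OF a m] lv_sq_int
      by (simp add: power2_eq_square)
  next
    case False
    have K: "{a, c} \<subseteq> {..<n}" using a c by auto
    have e: "\<And>\<omega>. (\<Prod>i\<in>{a,c}. lv (D i \<omega>)) = lv (D a \<omega>) * lv (D c \<omega>)"
      using False by simp
    show ?thesis
      using core[OF K, of "\<lambda>_. lv"] lv_int lv_mean False unfolding e by simp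
  qed
  then show "integrable M (\<lambda>\<omega>. lv (D a \<omega>) * lv (D c \<omega>))"
    and "(\<integral>\<omega>. lv (D a \<omega>) * lv (D c \<omega>) \<partial>M) = (if a = c then (\<integral>\<omega>. (lv (V \<omega>))\<^sup>2 \<partial>M) else 0)"
    by auto
qed

definition Cm :: "nat \<Rightarrow> nat \<Rightarrow> real" where
  "Cm j k = (\<integral>\<omega>. dv j (V \<omega>) * dv k (V \<omega>) \<partial>M)"

lemma quad:
  assumes ab: "a < b" "b < n" and ce: "c < e" "e < n" and jk: "j < p" "k < p"
  shows "integrable M (\<lambda>\<omega>. dv j (D a \<omega>) * dv j (D b \<omega>) * (dv k (D c \<omega>) * dv k (D e \<omega>)))"
    and "(\<integral>\<omega>. dv j (D a \<omega>) * dv j (D b \<omega>) * (dv k (D c \<omega>) * dv k (D e \<omega>)) \<partial>M)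
          = (if a = c \<and> b = e then (Cm j k)\<^sup>2 else 0)"
proof -
  define K where "K = {a, b, c, e}"
  define F where "F i x = (if i = a then dv j x else 1) * (if i = b then dv j x else 1) *
      (if i = c then dv k x else 1) * (if i = e then dv k x else 1)" for i x
  have K: "K \<subseteq> {..<n}" "finite K" using ab ce by (auto simp: K_def)
  have Fm: "\<And>i. i \<in> K \<Longrightarrow> F i \<in> borel_measurable (obs_space p)"
    unfolding F_def by measurable
  have Fi: "integrable M (\<lambda>\<omega>. F i (V \<omega>))" for i
    using ab ce dint[OF jk(1)] dint[OF jk(2)] dd_int[OF jk] dd_int[OF jk(2,1)]
    unfolding F_def
    by (cases "i = a"; cases "i = b"; cases "i = c"; cases "i = e") (auto simp: mult.commute)
  have prodF: "(\<Prod>i\<in>K. F i (D i \<omega>)) = dv j (D a \<omega>) * dv j (D b \<omega>) * (dv k (D c \<omega>) * dv k (D e \<omega>))" for \<omega>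
    unfolding F_def prod.distrib using K(2) by (simp add: K_def if_distrib prod.delta cong: if_cong)
  have C1: "integrable M (\<lambda>\<omega>. \<Prod>i\<in>K. F i (D i \<omega>))"
    by (rule core(1)) (use K Fm Fi in auto)
  have C2: "(\<integral>\<omega>. (\<Prod>i\<in>K. F i (D i \<omega>)) \<partial>M) = (\<Prod>i\<in>K. \<integral>\<omega>. F i (V \<omega>) \<partial>M)"
    by (rule core(2)) (use K Fm Fi in auto)
  show "integrable M (\<lambda>\<omega>. dv j (D a \<omega>) * dv j (D b \<omega>) * (dv k (D c \<omega>) * dv k (D e \<omega>)))"
    using C1 unfolding prodF .
  have "(\<Prod>i\<in>K. \<integral>\<omega>. F i (V \<omega>) \<partial>M) = (if a = c \<and> b = e then (Cm j k)\<^sup>2 else 0)"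
  proof (cases "a = c \<and> b = e")
    case True
    then have "K = {a, b}" by (auto simp: K_def)
    then show ?thesis using True ab
      by (simp add: F_def Cm_def power2_eq_square mult.commute)
  next
    case False
    have "\<exists>u\<in>K. (\<integral>\<omega>. F u (V \<omega>) \<partial>M) = 0"
    proof -
      have "a \<notin> {c, e} \<or> b \<notin> {c, e}" using False ab ce by auto
      then show ?thesis
      proof
        assume "a \<notin> {c, e}"
        then have "F a = dv j" using ab by (auto simp: F_def fun_eq_iff)
        then show ?thesis using dmean[OF jk(1)] by (auto simp: K_def)
      next
        assume "b \<notin> {c, e}"
        then have "F b = dv j" using ab by (auto simp: F_def fun_eq_iff)
        then show ?thesis using dmean[OF jk(1)] by (auto simp: K_def)
      qed
    qed
    then have "(\<Prod>i\<in>K. \<integral>\<omega>. F i (V \<omega>) \<partial>M) = 0" by (rule prod_zero[OF K(2)])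
    then show ?thesis using False by auto
  qed
  then show "(\<integral>\<omega>. dv j (D a \<omega>) * dv j (D b \<omega>) * (dv k (D c \<omega>) * dv k (D e \<omega>)) \<partial>M)
          = (if a = c \<and> b = e then (Cm j k)\<^sup>2 else 0)"
    using C2 unfolding prodF by simp
qed

end
lemma choose2_sum: "real (n choose 2) = (\<Sum>b<n. real b)"
proof (induction n)
  case 0 then show ?case by simp
next
  case (Suc n)
  have "(Suc n choose 2) = (n choose 1) + (n choose 2)"
    by (metis Suc_1 binomial_Suc_Suc)
  then show ?case using Suc by simp
qed
lemma gauss_real: "(\<Sum>b<n. real b) = real n * (real n - 1) / 2"
  by (induction n) (simp_all add: field_simps)

lemma comb:
  fixes f :: "nat \<Rightarrow> real"
  shows "(\<Sum>b<n. \<Sum>a<b. T + f a + f b + g a b) = real (n choose 2) * T + (real n - 1) * (\<Sum>a<n. f a)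
     + (\<Sum>b<n. \<Sum>a<b. g a b)"
proof (induction n)
  case 0 then show ?case by simp
next
  case (Suc n)
  have "(\<Sum>a<n. T + f a + f n + g a n) = real n * T + (\<Sum>a<n. f a) + real n * f n + (\<Sum>a<n. g a n)"
    by (simp add: sum.distrib)
  then show ?case using Suc by (simp add: choose2_sum algebra_simps)
qed

lemma int_sum2:
  fixes f :: "'i \<Rightarrow> 'j \<Rightarrow> 'a \<Rightarrow> real"
  assumes "\<And>a c. a \<in> A \<Longrightarrow> c \<in> B a \<Longrightarrow> integrable M (f a c)"
  shows "(\<integral>\<omega>. (\<Sum>a\<in>A. \<Sum>c\<in>B a. f a c \<omega>) \<partial>M) = (\<Sum>a\<in>A. \<Sum>c\<in>B a. \<integral>\<omega>. f a c \<omega> \<partial>M)"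
proof -
  have "(\<integral>\<omega>. (\<Sum>a\<in>A. \<Sum>c\<in>B a. f a c \<omega>) \<partial>M) = (\<Sum>a\<in>A. \<integral>\<omega>. (\<Sum>c\<in>B a. f a c \<omega>) \<partial>M)"
    by (rule Bochner_Integration.integral_sum[where f="\<lambda>a \<omega>. \<Sum>c\<in>B a. f a c \<omega>"]) (use assms in auto)
  also have "\<dots> = (\<Sum>a\<in>A. \<Sum>c\<in>B a. \<integral>\<omega>. f a c \<omega> \<partial>M)"
    by (intro sum.cong refl Bochner_Integration.integral_sum) (use assms in auto)
  finally show ?thesis .
qed

lemma int_sum2':
  fixes f :: "'i \<Rightarrow> 'j \<Rightarrow> 'a \<Rightarrow> real"
  assumes "\<And>a c. a \<in> A \<Longrightarrow> c \<in> B a \<Longrightarrow> integrable M (f a c)"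
  shows "integrable M (\<lambda>\<omega>. \<Sum>a\<in>A. \<Sum>c\<in>B a. f a c \<omega>)"
  using assms by (intro Bochner_Integration.integrable_sum) auto

lemma sumval:
  fixes S :: real
  assumes "b < n"
  shows "(\<Sum>e<n. \<Sum>a<b. \<Sum>c<e. (if a = c \<and> b = e then S else 0)) = real b * S"
proof -
  have "(\<Sum>e<n. \<Sum>a<b. \<Sum>c<e. (if a = c \<and> b = e then S else 0)) = (\<Sum>e<n. if e = b then real b * S else 0)"
  proof (intro sum.cong refl)
    fix e assume "e \<in> {..<n}"
    show "(\<Sum>a<b. \<Sum>c<e. (if a = c \<and> b = e then S else 0)) = (if e = b then real b * S else 0)"
    proof (cases "e = b")
      case True
      have "(\<Sum>a<b. \<Sum>c<b. (if a = c then S else 0)) = (\<Sum>a<b. S)"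
        by (intro sum.cong refl) (simp add: sum.delta)
      then show ?thesis using True by simp
    next
      case False then show ?thesis by auto
    qed
  qed
  also have "\<dots> = real b * S" using assms by simp
  finally show ?thesis .
qed

context tsetup
begin

definition Lw :: "'a \<Rightarrow> real" where
  "Lw \<omega> = (\<Sum>a<n. lv (D a \<omega>))"

definition Bw :: "'a \<Rightarrow> real" where
  "Bw \<omega> = (\<Sum>b<n. \<Sum>a<b. \<Sum>j<p. dv j (D a \<omega>) * dv j (D b \<omega>))"

lemma Dc_meas: "a < n \<Longrightarrow> f \<in> borel_measurable (obs_space p) \<Longrightarrow> (\<lambda>\<omega>. f (D a \<omega>)) \<in> borel_measurable M"
  by (rule measurable_compose[OF D_meas])

lemma Lw_meas: "Lw \<in> borel_measurable M"
  unfolding Lw_def by (intro borel_measurable_sum Dc_meas lv_meas) auto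

lemma Bw_meas: "Bw \<in> borel_measurable M"
  unfolding Bw_def by (intro borel_measurable_sum borel_measurable_times Dc_meas dv_meas) auto

lemma LL:
  shows "integrable M (\<lambda>\<omega>. (Lw \<omega>)\<^sup>2)"
    and "(\<integral>\<omega>. (Lw \<omega>)\<^sup>2 \<partial>M) = real n * (\<integral>\<omega>. (lv (V \<omega>))\<^sup>2 \<partial>M)"
proof -
  have eq: "(\<lambda>\<omega>. (Lw \<omega>)\<^sup>2) = (\<lambda>\<omega>. \<Sum>a<n. \<Sum>c<n. lv (D a \<omega>) * lv (D c \<omega>))"
    unfolding Lw_def power2_eq_square sum_product ..
  show "integrable M (\<lambda>\<omega>. (Lw \<omega>)\<^sup>2)"
    unfolding eq by (intro Bochner_Integration.integrable_sum pairL(1)) auto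
  have "(\<integral>\<omega>. (Lw \<omega>)\<^sup>2 \<partial>M) = (\<Sum>a<n. \<Sum>c<n. (\<integral>\<omega>. lv (D a \<omega>) * lv (D c \<omega>) \<partial>M))"
    unfolding eq by (rule int_sum2) (auto intro: pairL(1))
  also have "\<dots> = (\<Sum>a<n. \<Sum>c<n. (if a = c then (\<integral>\<omega>. (lv (V \<omega>))\<^sup>2 \<partial>M) else 0))"
    by (intro sum.cong refl pairL(2)) auto
  also have "\<dots> = real n * (\<integral>\<omega>. (lv (V \<omega>))\<^sup>2 \<partial>M)"
    by simp
  finally show "(\<integral>\<omega>. (Lw \<omega>)\<^sup>2 \<partial>M) = real n * (\<integral>\<omega>. (lv (V \<omega>))\<^sup>2 \<partial>M)" .
qed


definition SC :: real where "SC = (\<Sum>j<p. \<Sum>k<p. (Cm j k)\<^sup>2)"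

lemma BB:
  shows "integrable M (\<lambda>\<omega>. (Bw \<omega>)\<^sup>2)"
    and "(\<integral>\<omega>. (Bw \<omega>)\<^sup>2 \<partial>M) = real (n choose 2) * SC"
proof -
  define X where "X b e a c j k \<omega> = dv j (D a \<omega>) * dv j (D b \<omega>) * (dv k (D c \<omega>) * dv k (D e \<omega>))"
    for b e a c j k \<omega>
  have eq: "(\<lambda>\<omega>. (Bw \<omega>)\<^sup>2) = (\<lambda>\<omega>. \<Sum>b<n. \<Sum>e<n. \<Sum>a<b. \<Sum>c<e. \<Sum>j<p. \<Sum>k<p. X b e a c j k \<omega>)"
    unfolding Bw_def power2_eq_square X_def by (simp only: sum_product)
  have i6: "integrable M (X b e a c j k)" if "b<n" "e<n" "a<b" "c<e" "j<p" "k<p" for b e a c j k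
    unfolding X_def using quad(1) that by blast
  have i4: "integrable M (\<lambda>\<omega>. \<Sum>j<p. \<Sum>k<p. X b e a c j k \<omega>)" if "b<n" "e<n" "a<b" "c<e" for b e a c
    by (rule int_sum2') (use i6 that in auto)
  have i2: "integrable M (\<lambda>\<omega>. \<Sum>a<b. \<Sum>c<e. \<Sum>j<p. \<Sum>k<p. X b e a c j k \<omega>)" if "b<n" "e<n" for b e
    by (rule int_sum2') (use i4 that in auto)
  show "integrable M (\<lambda>\<omega>. (Bw \<omega>)\<^sup>2)"
    unfolding eq by (rule int_sum2') (use i2 in auto)
  have "(\<integral>\<omega>. (Bw \<omega>)\<^sup>2 \<partial>M) = (\<Sum>b<n. \<Sum>e<n. \<integral>\<omega>. (\<Sum>a<b. \<Sum>c<e. \<Sum>j<p. \<Sum>k<p. X b e a c j k \<omega>) \<partial>M)"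
    unfolding eq by (rule int_sum2) (use i2 in auto)
  also have "\<dots> = (\<Sum>b<n. \<Sum>e<n. \<Sum>a<b. \<Sum>c<e. \<integral>\<omega>. (\<Sum>j<p. \<Sum>k<p. X b e a c j k \<omega>) \<partial>M)"
    by (intro sum.cong refl int_sum2) (use i4 in auto)
  also have "\<dots> = (\<Sum>b<n. \<Sum>e<n. \<Sum>a<b. \<Sum>c<e. \<Sum>j<p. \<Sum>k<p. \<integral>\<omega>. X b e a c j k \<omega> \<partial>M)"
    by (intro sum.cong refl int_sum2) (use i6 in auto)
  also have "\<dots> = (\<Sum>b<n. \<Sum>e<n. \<Sum>a<b. \<Sum>c<e. (if a = c \<and> b = e then SC else 0))"
  proof (intro sum.cong refl)
    fix b e a c assume "b \<in> {..<n}" "e \<in> {..<n}" "a \<in> {..<b}" "c \<in> {..<e}"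
    then have h: "a < b" "b < n" "c < e" "e < n" by auto
    have "(\<Sum>j<p. \<Sum>k<p. \<integral>\<omega>. X b e a c j k \<omega> \<partial>M) = (\<Sum>j<p. \<Sum>k<p. (if a = c \<and> b = e then (Cm j k)\<^sup>2 else 0))"
      unfolding X_def by (intro sum.cong refl quad(2)) (use h in auto)
    also have "\<dots> = (if a = c \<and> b = e then SC else 0)"
      unfolding SC_def by (cases "a = c \<and> b = e") auto
    finally show "(\<Sum>j<p. \<Sum>k<p. \<integral>\<omega>. X b e a c j k \<omega> \<partial>M) = (if a = c \<and> b = e then SC else 0)" .
  qed
  also have "\<dots> = (\<Sum>b<n. real b * SC)"
    by (intro sum.cong refl sumval) auto
  also have "\<dots> = real (n choose 2) * SC"
    by (simp add: choose2_sum sum_distrib_right)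
  finally show "(\<integral>\<omega>. (Bw \<omega>)\<^sup>2 \<partial>M) = real (n choose 2) * SC" .
qed


lemma inner: "(\<Sum>j<p. wv j x * wv j y) = tau2 M p V + lv x + lv y + (\<Sum>j<p. dv j x * dv j y)"
proof -
  have "\<And>j. wv j x * wv j y = (bt j)\<^sup>2 + bt j * dv j x + bt j * dv j y + dv j x * dv j y"
    by (simp add: dv_def power2_eq_square algebra_simps)
  then show ?thesis by (simp add: sum.distrib tau2_def lv_def)
qed

lemma Z_eq:
  assumes c: "real (n choose 2) \<noteq> 0"
  shows "tau2_hat n p D \<omega> - tau2 M p V =
     ((real n - 1) / real (n choose 2)) * Lw \<omega> + (1 / real (n choose 2)) * Bw \<omega>"
proof -
  have "tau2_hat n p D \<omega> = inverse (real (n choose 2)) *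
     (\<Sum>b<n. \<Sum>a<b. tau2 M p V + lv (D a \<omega>) + lv (D b \<omega>) + (\<Sum>j<p. dv j (D a \<omega>) * dv j (D b \<omega>)))"
    unfolding tau2_hat_def inner[symmetric] by (simp add: wv_def)
  also have "\<dots> = inverse (real (n choose 2)) * (real (n choose 2) * tau2 M p V + (real n - 1) * Lw \<omega> + Bw \<omega>)"
    unfolding comb Lw_def Bw_def ..
  finally show ?thesis using c by (simp add: field_simps)
qed

lemma sq_sum_le: "((x::real) + y)\<^sup>2 \<le> 2 * x\<^sup>2 + 2 * y\<^sup>2"
proof -
  have "0 \<le> (x - y)\<^sup>2" by simp
  then show ?thesis by (simp add: power2_eq_square algebra_simps)
qed

lemma Zbound:
  assumes c: "real (n choose 2) \<noteq> 0"
  defines "Z \<equiv> \<lambda>\<omega>. tau2_hat n p D \<omega> - tau2 M p V"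
  shows "integrable M (\<lambda>\<omega>. (Z \<omega>)\<^sup>2)"
    and "(\<integral>\<omega>. (Z \<omega>)\<^sup>2 \<partial>M) \<le> 2 * ((real n - 1) / real (n choose 2))\<^sup>2 * (real n * (\<integral>\<omega>. (lv (V \<omega>))\<^sup>2 \<partial>M))
        + 2 * (1 / real (n choose 2))\<^sup>2 * (real (n choose 2) * SC)"
proof -
  define \<alpha> where "\<alpha> = (real n - 1) / real (n choose 2)"
  define \<gamma> where "\<gamma> = 1 / real (n choose 2)"
  have Zeq: "Z = (\<lambda>\<omega>. \<alpha> * Lw \<omega> + \<gamma> * Bw \<omega>)"
    unfolding Z_def \<alpha>_def \<gamma>_def using Z_eq[OF c] by auto
  have gi: "integrable M (\<lambda>\<omega>. 2 * \<alpha>\<^sup>2 * (Lw \<omega>)\<^sup>2 + 2 * \<gamma>\<^sup>2 * (Bw \<omega>)\<^sup>2)"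
    using LL(1) BB(1) by simp
  have le: "(Z \<omega>)\<^sup>2 \<le> 2 * \<alpha>\<^sup>2 * (Lw \<omega>)\<^sup>2 + 2 * \<gamma>\<^sup>2 * (Bw \<omega>)\<^sup>2" for \<omega>
    using sq_sum_le[of "\<alpha> * Lw \<omega>" "\<gamma> * Bw \<omega>"] unfolding Zeq by (simp add: power_mult_distrib)
  have Zm: "(\<lambda>\<omega>. (Z \<omega>)\<^sup>2) \<in> borel_measurable M"
    unfolding Zeq using Lw_meas Bw_meas by measurable
  show zi: "integrable M (\<lambda>\<omega>. (Z \<omega>)\<^sup>2)"
    by (rule Bochner_Integration.integrable_bound[OF gi Zm]) (use le in \<open>auto intro!: AE_I2\<close>)
  have "(\<integral>\<omega>. (Z \<omega>)\<^sup>2 \<partial>M) \<le> (\<integral>\<omega>. 2 * \<alpha>\<^sup>2 * (Lw \<omega>)\<^sup>2 + 2 * \<gamma>\<^sup>2 * (Bw \<omega>)\<^sup>2 \<partial>M)"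
    by (rule integral_mono[OF zi gi le])
  also have "\<dots> = 2 * \<alpha>\<^sup>2 * (\<integral>\<omega>. (Lw \<omega>)\<^sup>2 \<partial>M) + 2 * \<gamma>\<^sup>2 * (\<integral>\<omega>. (Bw \<omega>)\<^sup>2 \<partial>M)"
    using LL(1) BB(1) by simp
  finally show "(\<integral>\<omega>. (Z \<omega>)\<^sup>2 \<partial>M) \<le> 2 * ((real n - 1) / real (n choose 2))\<^sup>2 * (real n * (\<integral>\<omega>. (lv (V \<omega>))\<^sup>2 \<partial>M))
        + 2 * (1 / real (n choose 2))\<^sup>2 * (real (n choose 2) * SC)"
    unfolding LL(2) BB(2) \<alpha>_def \<gamma>_def .
qed


lemma tau2_nonneg: "0 \<le> tau2 M p V"
  unfolding tau2_def by (simp add: sum_nonneg)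

lemma bb_sum: "(\<Sum>j<p. \<Sum>k<p. (bt j * bt k)\<^sup>2) = (tau2 M p V)\<^sup>2"
  unfolding tau2_def power2_eq_square[of "sum _ _"] sum_product power_mult_distrib ..

lemma CS_R: "(\<Sum>j<p. \<Sum>k<p. bt j * bt k * A_mat M V j k) \<le> tau2 M p V * sqrt (A_frob2 M p V)"
proof -
  define R where "R = (\<Sum>j<p. \<Sum>k<p. bt j * bt k * A_mat M V j k)"
  have "R = (\<Sum>(j,k)\<in>{..<p}\<times>{..<p}. (bt j * bt k) * A_mat M V j k)"
    unfolding R_def sum.cartesian_product ..
  also have "\<dots> = (\<Sum>x\<in>{..<p}\<times>{..<p}. (bt (fst x) * bt (snd x)) * A_mat M V (fst x) (snd x))"
    by (simp add: case_prod_beta)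
  finally have "R\<^sup>2 \<le> (\<Sum>x\<in>{..<p}\<times>{..<p}. (bt (fst x) * bt (snd x))\<^sup>2) * (\<Sum>x\<in>{..<p}\<times>{..<p}. (A_mat M V (fst x) (snd x))\<^sup>2)"
    using Cauchy_Schwarz_ineq_sum by metis
  also have "(\<Sum>x\<in>{..<p}\<times>{..<p}. (bt (fst x) * bt (snd x))\<^sup>2) = (tau2 M p V)\<^sup>2"
    unfolding bb_sum[symmetric] sum.cartesian_product by (simp add: case_prod_beta)
  also have "(\<Sum>x\<in>{..<p}\<times>{..<p}. (A_mat M V (fst x) (snd x))\<^sup>2) = A_frob2 M p V"
    unfolding A_frob2_def sum.cartesian_product by (simp add: case_prod_beta)
  finally have "R\<^sup>2 \<le> (tau2 M p V)\<^sup>2 * A_frob2 M p V" .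
  then have "sqrt (R\<^sup>2) \<le> sqrt ((tau2 M p V)\<^sup>2 * A_frob2 M p V)" by (rule real_sqrt_le_mono)
  then have "\<bar>R\<bar> \<le> tau2 M p V * sqrt (A_frob2 M p V)"
    using tau2_nonneg by (simp add: real_sqrt_mult)
  then show ?thesis unfolding R_def by linarith
qed

lemma Q_bound: "(\<integral>\<omega>. (lv (V \<omega>))\<^sup>2 \<partial>M) \<le> 2 * (tau2 M p V * sqrt (A_frob2 M p V)) + 2 * (tau2 M p V)\<^sup>2"
proof -
  define P where "P x = (\<Sum>j<p. bt j * wv j x)" for x
  have lvP: "lv x = P x - tau2 M p V" for x
    unfolding lv_def P_def tau2_def dv_def
    by (simp add: right_diff_distrib sum_subtractf power2_eq_square)
  have P2: "(\<lambda>\<omega>. (P (V \<omega>))\<^sup>2) = (\<lambda>\<omega>. \<Sum>j<p. \<Sum>k<p. bt j * bt k * (wv j (V \<omega>) * wv k (V \<omega>)))"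
    unfolding P_def power2_eq_square sum_product by (simp add: algebra_simps)
  have i: "integrable M (\<lambda>\<omega>. bt j * bt k * (wv j (V \<omega>) * wv k (V \<omega>)))" if "j < p" "k < p" for j k
    using ww_int[OF that] by simp
  have Pi: "integrable M (\<lambda>\<omega>. (P (V \<omega>))\<^sup>2)"
    unfolding P2 by (rule int_sum2') (use i in auto)
  have EP: "(\<integral>\<omega>. (P (V \<omega>))\<^sup>2 \<partial>M) = (\<Sum>j<p. \<Sum>k<p. bt j * bt k * A_mat M V j k)"
    unfolding P2 by (subst int_sum2) (use i in \<open>auto simp: A_mat_def wv_def\<close>)
  have gi: "integrable M (\<lambda>\<omega>. 2 * (P (V \<omega>))\<^sup>2 + 2 * (tau2 M p V)\<^sup>2)"
    using Pi by simp
  have "(\<integral>\<omega>. (lv (V \<omega>))\<^sup>2 \<partial>M) \<le> (\<integral>\<omega>. 2 * (P (V \<omega>))\<^sup>2 + 2 * (tau2 M p V)\<^sup>2 \<partial>M)"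
    by (rule integral_mono[OF lv_sq_int gi])
       (use sq_sum_le[of "P _" "- tau2 M p V"] in \<open>simp add: lvP\<close>)
  also have "\<dots> = 2 * (\<integral>\<omega>. (P (V \<omega>))\<^sup>2 \<partial>M) + 2 * (tau2 M p V)\<^sup>2"
    using Pi by (simp add: prob_space)
  finally show ?thesis unfolding EP using CS_R by linarith
qed

lemma SC_bound: "SC \<le> 2 * A_frob2 M p V + 2 * (tau2 M p V)\<^sup>2"
proof -
  have "SC = (\<Sum>j<p. \<Sum>k<p. (A_mat M V j k - bt j * bt k)\<^sup>2)"
    unfolding SC_def Cm_def by (intro sum.cong refl) (simp add: dd_eq)
  also have "\<dots> \<le> (\<Sum>j<p. \<Sum>k<p. 2 * (A_mat M V j k)\<^sup>2 + 2 * (bt j * bt k)\<^sup>2)"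
    by (intro sum_mono) (use sq_sum_le in \<open>metis diff_conv_add_uminus power2_minus\<close>)
  also have "\<dots> = 2 * A_frob2 M p V + 2 * (tau2 M p V)\<^sup>2"
    unfolding bb_sum[symmetric] A_frob2_def by (simp add: sum.distrib sum_distrib_left)
  finally show ?thesis .
qed


lemma SC_nonneg: "0 \<le> SC"
  unfolding SC_def by (intro sum_nonneg) auto

lemma final_n:
  assumes n2: "n \<ge> 2" and e: "\<epsilon> > 0"
  shows "measure M {\<omega> \<in> space M. \<bar>tau2_hat n p D \<omega> - tau2 M p V\<bar> > \<epsilon>}
     \<le> ((8 / real n) * (2 * (tau2 M p V * sqrt (A_frob2 M p V)) + 2 * (tau2 M p V)\<^sup>2)
        + (8 / (real n)\<^sup>2) * (2 * A_frob2 M p V + 2 * (tau2 M p V)\<^sup>2)) / \<epsilon>\<^sup>2"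
proof -
  define Z where "Z = (\<lambda>\<omega>. tau2_hat n p D \<omega> - tau2 M p V)"
  define Q where "Q = (\<integral>\<omega>. (lv (V \<omega>))\<^sup>2 \<partial>M)"
  have nr: "real n \<ge> 2" using n2 by simp
  have c: "real (n choose 2) = real n * (real n - 1) / 2"
    by (simp add: choose2_sum gauss_real)
  have c0: "real (n choose 2) \<noteq> 0" using nr unfolding c by simp
  have ZB1: "integrable M (\<lambda>\<omega>. (Z \<omega>)\<^sup>2)" using Zbound(1)[OF c0] unfolding Z_def .
  have ZB2: "(\<integral>\<omega>. (Z \<omega>)\<^sup>2 \<partial>M) \<le> 2 * ((real n - 1) / real (n choose 2))\<^sup>2 * (real n * Q)
        + 2 * (1 / real (n choose 2))\<^sup>2 * (real (n choose 2) * SC)"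
    using Zbound(2)[OF c0] unfolding Z_def Q_def .
  have Q0: "0 \<le> Q" unfolding Q_def by simp
  have n1: "real n - 1 \<noteq> 0" "real n \<noteq> 0" using nr by auto
  have a2: "(real n - 1) / real (n choose 2) = 2 / real n"
    unfolding c using n1 by (simp add: field_simps)
  have t1: "2 * ((real n - 1) / real (n choose 2))\<^sup>2 * (real n * Q) = (8 / real n) * Q"
    unfolding a2 using n1 by (simp add: field_simps power2_eq_square)
  have t2: "2 * (1 / real (n choose 2))\<^sup>2 * (real (n choose 2) * SC) \<le> (8 / (real n)\<^sup>2) * SC"
  proof -
    have "2 * (1 / real (n choose 2))\<^sup>2 * (real (n choose 2) * SC) = 2 * SC / real (n choose 2)"
      using c0 by (simp add: power2_eq_square)
    also have "\<dots> = 4 * SC / (real n * (real n - 1))"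
      unfolding c using n1 by (simp add: field_simps)
    also have "\<dots> = 8 * SC / (real n * (real n - 1) * 2)" by simp
    also have "\<dots> \<le> 8 * SC / (real n * real n)"
    proof (rule frac_le)
      show "0 \<le> 8 * SC" using SC_nonneg by simp
      show "0 < real n * real n" using nr by simp
      show "8 * SC \<le> 8 * SC" by simp
      show "real n * real n \<le> real n * (real n - 1) * 2"
      proof -
        have "real n \<le> (real n - 1) * 2" using nr by simp
        then have "real n * real n \<le> real n * ((real n - 1) * 2)"
          by (rule mult_left_mono) simp
        then show ?thesis by (simp add: mult.assoc)
      qed
    qed
    also have "\<dots> \<le> (8 / (real n)\<^sup>2) * SC" by (simp add: power2_eq_square)
    finally show ?thesis by (simp add: mult.assoc)
  qed
  have EZ: "(\<integral>\<omega>. (Z \<omega>)\<^sup>2 \<partial>M) \<le> (8 / real n) * (2 * (tau2 M p V * sqrt (A_frob2 M p V)) + 2 * (tau2 M p V)\<^sup>2)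
        + (8 / (real n)\<^sup>2) * (2 * A_frob2 M p V + 2 * (tau2 M p V)\<^sup>2)"
  proof -
    have "(\<integral>\<omega>. (Z \<omega>)\<^sup>2 \<partial>M) \<le> (8 / real n) * Q + (8 / (real n)\<^sup>2) * SC"
      using ZB2 t1 t2 by linarith
    also have "\<dots> \<le> (8 / real n) * (2 * (tau2 M p V * sqrt (A_frob2 M p V)) + 2 * (tau2 M p V)\<^sup>2)
        + (8 / (real n)\<^sup>2) * (2 * A_frob2 M p V + 2 * (tau2 M p V)\<^sup>2)"
      by (intro add_mono mult_left_mono) (use Q_bound SC_bound nr in \<open>auto simp: Q_def\<close>)
    finally show ?thesis .
  qed
  have Zm: "(\<lambda>\<omega>. (Z \<omega>)\<^sup>2) \<in> borel_measurable M"
    using ZB1 by auto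
  have "measure M {\<omega> \<in> space M. \<bar>Z \<omega>\<bar> > \<epsilon>} \<le> measure M {\<omega> \<in> space M. (Z \<omega>)\<^sup>2 \<ge> \<epsilon>\<^sup>2}"
  proof (rule finite_measure_mono)
    show "{\<omega> \<in> space M. \<bar>Z \<omega>\<bar> > \<epsilon>} \<subseteq> {\<omega> \<in> space M. (Z \<omega>)\<^sup>2 \<ge> \<epsilon>\<^sup>2}"
    proof safe
      fix \<omega> assume "\<bar>Z \<omega>\<bar> > \<epsilon>"
      then have "\<epsilon>\<^sup>2 \<le> \<bar>Z \<omega>\<bar>\<^sup>2" using e by (intro power_mono) auto
      then show "\<epsilon>\<^sup>2 \<le> (Z \<omega>)\<^sup>2" by simp
    qed
    show "{\<omega> \<in> space M. (Z \<omega>)\<^sup>2 \<ge> \<epsilon>\<^sup>2} \<in> sets M" using Zm by measurable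
  qed
  also have "\<dots> \<le> (\<integral>\<omega>. (Z \<omega>)\<^sup>2 \<partial>M) / \<epsilon>\<^sup>2"
    by (rule integral_Markov_inequality_measure[OF ZB1]) (use e Zm in auto)
  also have "\<dots> \<le> ((8 / real n) * (2 * (tau2 M p V * sqrt (A_frob2 M p V)) + 2 * (tau2 M p V)\<^sup>2)
        + (8 / (real n)\<^sup>2) * (2 * A_frob2 M p V + 2 * (tau2 M p V)\<^sup>2)) / \<epsilon>\<^sup>2"
    by (rule divide_right_mono[OF EZ]) simp
  finally show ?thesis unfolding Z_def .
qed

end
theorem proposition2:
  fixes M :: "nat \<Rightarrow> 'a measure"
    and p :: "nat \<Rightarrow> nat"
    and V :: "nat \<Rightarrow> 'a \<Rightarrow> (nat \<Rightarrow> real) \<times> real"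
    and D :: "nat \<Rightarrow> nat \<Rightarrow> 'a \<Rightarrow> (nat \<Rightarrow> real) \<times> real"
  assumes prob: "\<And>n. prob_space (M n)"
    and V_meas: "\<And>n. V n \<in> measurable (M n) (obs_space (p n))"
    and D_meas: "\<And>n i. i < n \<Longrightarrow> D n i \<in> measurable (M n) (obs_space (p n))"
    and D_indep: "\<And>n. prob_space.indep_vars (M n) (\<lambda>_. obs_space (p n)) (D n) {..<n}"
    and D_ident: "\<And>n i. i < n \<Longrightarrow>
        distr (M n) (obs_space (p n)) (D n i) = distr (M n) (obs_space (p n)) (V n)"
    and Y2: "\<And>n. integrable (M n) (\<lambda>\<omega>. (snd (V n \<omega>))\<^sup>2)"
    and X2: "\<And>n. integrable (M n) (\<lambda>\<omega>. \<Sum>j<p n. (fst (V n \<omega>) j)\<^sup>2)"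
    and EX0: "\<And>n j. j < p n \<Longrightarrow> (\<integral>\<omega>. fst (V n \<omega>) j \<partial>M n) = 0"
    and VarX: "\<And>n j k. j < p n \<Longrightarrow> k < p n \<Longrightarrow>
        (\<integral>\<omega>. fst (V n \<omega>) j * fst (V n \<omega>) k \<partial>M n) = (if j = k then 1 else 0)"
    and A_fin: "\<And>n j k. j < p n \<Longrightarrow> k < p n \<Longrightarrow>
        integrable (M n) (\<lambda>\<omega>. (fst (V n \<omega>) j * snd (V n \<omega>)) * (fst (V n \<omega>) k * snd (V n \<omega>)))"
    and A_lim: "(\<lambda>n. A_frob2 (M n) (p n) (V n) / (real n)\<^sup>2) \<longlonglongrightarrow> 0"
    and tau_bdd: "\<exists>C. \<forall>n. tau2 (M n) (p n) (V n) \<le> C"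
  shows "\<forall>\<epsilon>>0. (\<lambda>n. measure (M n) {\<omega> \<in> space (M n).
            \<bar>tau2_hat n (p n) (D n) \<omega> - tau2 (M n) (p n) (V n)\<bar> > \<epsilon>}) \<longlonglongrightarrow> 0"
proof (intro allI impI)
  fix \<epsilon> :: real assume e: "\<epsilon> > 0"
  obtain C where C: "\<And>n. tau2 (M n) (p n) (V n) \<le> C" using tau_bdd by blast
  have TS: "tsetup (M n) (p n) n (V n) (D n)" for n
    unfolding tsetup_def tsetup_axioms_def using prob V_meas D_meas D_indep D_ident A_fin by auto
  define T where "T n = tau2 (M n) (p n) (V n)" for n
  define F where "F n = A_frob2 (M n) (p n) (V n)" for n
  have T0: "0 \<le> T n" for n unfolding T_def by (rule tsetup.tau2_nonneg[OF TS])
  have F0: "0 \<le> F n" for n unfolding F_def A_frob2_def by (intro sum_nonneg) auto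
  have TC: "T n \<le> C" for n unfolding T_def by (rule C)
  have C0: "0 \<le> C" using T0[of 0] TC[of 0] by linarith
  have TC2: "(T n)\<^sup>2 \<le> C\<^sup>2" for n using T0[of n] TC[of n] by (intro power_mono) auto
  define U where "U n = (16 * C * sqrt (F n / (real n)\<^sup>2) + 16 * C\<^sup>2 / real n
      + 16 * (F n / (real n)\<^sup>2) + 16 * C\<^sup>2 / (real n)\<^sup>2) / \<epsilon>\<^sup>2" for n
  have FL: "(\<lambda>n. F n / (real n)\<^sup>2) \<longlonglongrightarrow> 0" using A_lim unfolding F_def .
  have U0: "U \<longlonglongrightarrow> 0"
  proof -
    have s: "(\<lambda>n. sqrt (F n / (real n)\<^sup>2)) \<longlonglongrightarrow> 0" using tendsto_real_sqrt[OF FL] by simp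
    have a: "(\<lambda>n. 16 * C\<^sup>2 / real n) \<longlonglongrightarrow> 0" by real_asymp
    have b: "(\<lambda>n. 16 * C\<^sup>2 / (real n)\<^sup>2) \<longlonglongrightarrow> 0" by real_asymp
    have "(\<lambda>n. (16 * C * sqrt (F n / (real n)\<^sup>2) + 16 * C\<^sup>2 / real n
      + 16 * (F n / (real n)\<^sup>2) + 16 * C\<^sup>2 / (real n)\<^sup>2) / \<epsilon>\<^sup>2)
      \<longlonglongrightarrow> (16 * C * 0 + 0 + 16 * 0 + 0) / \<epsilon>\<^sup>2"
      by (intro tendsto_intros s a b FL) (use e in simp)
    then show ?thesis unfolding U_def by simp
  qed
  show "(\<lambda>n. measure (M n) {\<omega> \<in> space (M n).
            \<bar>tau2_hat n (p n) (D n) \<omega> - tau2 (M n) (p n) (V n)\<bar> > \<epsilon>}) \<longlonglongrightarrow> 0"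
  proof (rule tendsto_sandwich[OF _ _ tendsto_const U0])
    show "\<forall>\<^sub>F n in sequentially. 0 \<le> measure (M n) {\<omega> \<in> space (M n).
            \<bar>tau2_hat n (p n) (D n) \<omega> - tau2 (M n) (p n) (V n)\<bar> > \<epsilon>}" by simp
    show "\<forall>\<^sub>F n in sequentially. measure (M n) {\<omega> \<in> space (M n).
            \<bar>tau2_hat n (p n) (D n) \<omega> - tau2 (M n) (p n) (V n)\<bar> > \<epsilon>} \<le> U n"
    proof (rule eventually_sequentiallyI[of 2])
      fix n :: nat assume n2: "2 \<le> n"
      have nr: "real n > 0" using n2 by simp
      have "measure (M n) {\<omega> \<in> space (M n).
            \<bar>tau2_hat n (p n) (D n) \<omega> - tau2 (M n) (p n) (V n)\<bar> > \<epsilon>}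
         \<le> ((8 / real n) * (2 * (T n * sqrt (F n)) + 2 * (T n)\<^sup>2)
            + (8 / (real n)\<^sup>2) * (2 * F n + 2 * (T n)\<^sup>2)) / \<epsilon>\<^sup>2"
        using tsetup.final_n[OF TS n2 e] unfolding T_def F_def .
      also have "\<dots> \<le> U n"
        unfolding U_def
      proof (rule divide_right_mono)
        have sq: "sqrt (F n / (real n)\<^sup>2) = sqrt (F n) / real n"
          using nr by (simp add: real_sqrt_divide)
        have eqL: "(8 / real n) * (2 * (T n * sqrt (F n)) + 2 * (T n)\<^sup>2)
            + (8 / (real n)\<^sup>2) * (2 * F n + 2 * (T n)\<^sup>2)
          = 16 * (T n * sqrt (F n)) / real n + 16 * (T n)\<^sup>2 / real n
            + 16 * (F n / (real n)\<^sup>2) + 16 * (T n)\<^sup>2 / (real n)\<^sup>2"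
          using nr by (simp add: field_simps)
        have eqR: "16 * C * sqrt (F n / (real n)\<^sup>2) = 16 * (C * sqrt (F n)) / real n"
          unfolding sq by simp
        have i1: "16 * (T n * sqrt (F n)) / real n \<le> 16 * (C * sqrt (F n)) / real n"
          using nr TC[of n] F0[of n] by (intro divide_right_mono mult_left_mono mult_right_mono) auto
        have i2: "16 * (T n)\<^sup>2 / real n \<le> 16 * C\<^sup>2 / real n"
          using nr TC2[of n] by (intro divide_right_mono mult_left_mono) auto
        have i3: "16 * (T n)\<^sup>2 / (real n)\<^sup>2 \<le> 16 * C\<^sup>2 / (real n)\<^sup>2"
          using nr TC2[of n] by (intro divide_right_mono mult_left_mono) auto
        show "(8 / real n) * (2 * (T n * sqrt (F n)) + 2 * (T n)\<^sup>2)
            + (8 / (real n)\<^sup>2) * (2 * F n + 2 * (T n)\<^sup>2)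
          \<le> 16 * C * sqrt (F n / (real n)\<^sup>2) + 16 * C\<^sup>2 / real n
            + 16 * (F n / (real n)\<^sup>2) + 16 * C\<^sup>2 / (real n)\<^sup>2"
          unfolding eqL eqR using i1 i2 i3 by linarith
        show "0 \<le> \<epsilon>\<^sup>2" by simp
      qed
      finally show "measure (M n) {\<omega> \<in> space (M n).
            \<bar>tau2_hat n (p n) (D n) \<omega> - tau2 (M n) (p n) (V n)\<bar> > \<epsilon>} \<le> U n" .
    qed
  qed
qed

end
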